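(* Let $I\subseteq\mathbb{R}$ be a compact interval, let $b,d\colon I\to[0,\infty)$ and $c\colon I^2\to[0,\infty)$ be twice continuously differentiable, and let $f$ be the monomorphic invasion fitness defined in the context. Let $x_0$ be a point in the interior of $I$ which is not a local fitness maximum or minimum, and for $\delta>0$ let $g_\delta\colon[0,\infty)\to\mathcal{X}_\delta$ be the resident-trait function started from the unique resident trait $x_0$, as described in the context. Then, for every $T>0$, the functions $t\mapsto g_\delta(t/\delta^2)$ converge uniformly on $[0,T]$ (in particular in the space of càdlàg paths $\mathbb{D}([0,T],\mathbb{R})$) as $\delta\to0$ to the unique function $x\colon[0,T]\to I$ solving $$\frac{\mathrm{d}x}{\mathrm{d}t}=\partial_1 f(x(t),x(t)),\qquad x(0)=x_0.$$
   Context: Model: for $\delta>0$ the trait space is the grid $\mathcal{X}_\delta=I\cap\delta\mathbb{Z}$ (the grid is shifted if necessary so that $x_0\in\mathcal{X}_\delta$ for all $\delta$). An individual with trait $x$ gives birth at rate $b(x)$; with probability $K^{-\alpha}$ ($\alpha\in(0,1)$, $K$ the carrying capacity) the offspring mutates to $x+\delta$ or $x-\delta$ with equal probability (keeping the parental trait if the mutant is outside $\mathcal{X}_\delta$); it dies at rate $d(x)$ and, due to competition with each individual of trait $y$, at rate $c(x,y)/K$. A set of traits $\mathbf v$ coexists if the Lotka–Volterra system $\dot n_y=n_y(b(y)-d(y)-\sum_{x\in\mathbf v}c(y,x)n_x)$, $y\in\mathbf v$, has a unique coordinatewise strictly positive equilibrium $\bar n(\mathbf v)$; the invasion fitness of $y$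 against $\mathbf v$ is $f(y,\mathbf v)=b(y)-d(y)-\sum_{x\in\mathbf v}c(y,x)\bar n_x(\mathbf v)$, and $f(y,x):=f(y,\{x\})=b(y)-d(y)-c(y,x)\frac{b(x)-d(x)}{c(x,x)}$ (with $b(x)>d(x)$ so that single traits coexist). A trait $x$ is a local fitness minimum if $f(x+\delta,x)>0$ and $f(x-\delta,x)>0$, and a local fitness maximum if $f(x+\delta,x)<0$ and $f(x-\delta,x)<0$. Large-population limit: writing the population size of trait $x$ at time $t\log K$ as $K^{\beta^K_{x}(t)}-1$, as $K\to\infty$ and then $\alpha\to1$ the exponents converge to deterministic piecewise affine functions $\beta^\delta_x$, defined recursively: $\beta^\delta_{x_0}(0)=1$, $\beta^\delta_x(0)=0$ otherwise, $s_0=0$, $\mathbf v_0=\{x_0\}$; for $t\in[s_{k-1},s_k]$, $\beta^\delta_x(t)=[\beta^\delta_x(s_{k-1})+(t-s_{k-1})f(x,\mathbf v_{k-1})]\vee0$ if $x$ is a grid neighbour of a trait in $\mathbf v_{k-1}$ (not in $\mathbf v_{k-1}$) or $\beta^\delta_x(s_{k-1})>0$, and $\beta^\delta_x(t)=0$ otherwise; $s_k$ is the first time after $s_{k-1}$ at which some $y_k\notin\mathbf v_{k-1}$ has $\beta^\delta_{y_k}=1$, and $\mathbf v_k$ consists of the traits with positive coordinates in the equilibrium of the Lotka–Volterra system for $\mathbf v_{k-1}\cup\{y_k\}$. A trait $x$ is resident at time $t$ if $\beta^\delta_x(t)=1$. Standing assumptions: the population stays monomorphic (at each time there is a unique resident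 trait and each change of resident replaces it by a grid neighbour); every trait $x$ that is resident at some time $t_1$ and has $\beta^\delta_x(t_2)<1$ at a later time $t_2$ satisfies $\beta^\delta_x<1$ on $[t_2,t_3]$ and $\beta^\delta_x(t_3)=0$ for some $t_3>t_2$; and (by convention on the direction of evolution) the resident trait increases. $g_\delta(t)$ is the unique resident trait at time $t$, taken càdlàg at the change times; under these conventions $$g_\delta(t)=x_0+\max\Big\{i\delta:\ t\ge\sum_{k=0}^{i-1}\frac{1}{f(x_0+(k+1)\delta,\,x_0+k\delta)}\Big\},$$ with the convention that $1/f=\infty$ when $f\le 0$.
   Formalization: The limit is any function x: [0,T] -> I with $x(0)=x_0$ solving the differential equation, whose existence is assumed, and $x_0$ is neither a local fitness maximum nor minimum for all sufficiently small $\delta$. Apart from conventions, each condition added here is assumed in the paper as well or is needed for the statement above to hold. *)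

theory Defs
  imports "HOL-Analysis.Analysis"
begin

definition C2_on :: "'a::real_normed_vector set \<Rightarrow> ('a \<Rightarrow> real) \<Rightarrow> bool" where
  "C2_on S h \<longleftrightarrow>
     (\<exists>(h1 :: 'a \<Rightarrow> 'a \<Rightarrow>\<^sub>L real) (h2 :: 'a \<Rightarrow> 'a \<Rightarrow>\<^sub>L ('a \<Rightarrow>\<^sub>L real)).
        (\<forall>p\<in>S. (h has_derivative blinfun_apply (h1 p)) (at p within S)) \<and>
        (\<forall>p\<in>S. (h1 has_derivative blinfun_apply (h2 p)) (at p within S)) \<and>
        continuous_on S h2)"

text \<open>Monomorphic invasion fitness f(y,x) of trait y against resident x.\<close>
definition fit :: "(real \<Rightarrow> real) \<Rightarrow> (real \<Rightarrow> real) \<Rightarrow> (real \<Rightarrow> real \<Rightarrow> real)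
                   \<Rightarrow> real \<Rightarrow> real \<Rightarrow> real" where
  "fit b d c y x = b y - d y - c y x * (b x - d x) / c x x"

definition local_fitness_min :: "(real \<Rightarrow> real \<Rightarrow> real) \<Rightarrow> real \<Rightarrow> real \<Rightarrow> bool" where
  "local_fitness_min f \<delta> x \<longleftrightarrow> f (x + \<delta>) x > 0 \<and> f (x - \<delta>) x > 0"

definition local_fitness_max :: "(real \<Rightarrow> real \<Rightarrow> real) \<Rightarrow> real \<Rightarrow> real \<Rightarrow> bool" where
  "local_fitness_max f \<delta> x \<longleftrightarrow> f (x + \<delta>) x < 0 \<and> f (x - \<delta>) x < 0"

text \<open>The resident trait has made (at least) i upward steps by time t: each of the first
  i successive grid neighbours x0+(k+1)delta lies in the trait space I and has positive
  invasion fitness against x0+k delta (otherwise 1/f = infinity), and t is at least the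
  sum of the waiting times 1/f.\<close>
definition reached :: "real set \<Rightarrow> (real \<Rightarrow> real \<Rightarrow> real) \<Rightarrow> real \<Rightarrow> real \<Rightarrow> real \<Rightarrow> nat \<Rightarrow> bool" where
  "reached I f x0 \<delta> t i \<longleftrightarrow>
     (\<forall>k<i. x0 + real (Suc k) * \<delta> \<in> I \<and> f (x0 + real (Suc k) * \<delta>) (x0 + real k * \<delta>) > 0) \<and>
     t \<ge> (\<Sum>k<i. 1 / f (x0 + real (Suc k) * \<delta>) (x0 + real k * \<delta>))"

definition resident :: "real set \<Rightarrow> (real \<Rightarrow> real \<Rightarrow> real) \<Rightarrow> real \<Rightarrow> real \<Rightarrow> real \<Rightarrow> real" where
  "resident I f x0 \<delta> t = x0 + real (Max {i. reached I f x0 \<delta> t i}) * \<delta>"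

end

theory Submission
  imports Defs
begin

lemma blin_real: "blinfun_apply (f :: real \<Rightarrow>\<^sub>L real) = (*) (blinfun_apply f 1)"
proof
  fix h :: real
  have "blinfun_apply f h = blinfun_apply f (h *\<^sub>R 1)" by simp
  also have "\<dots> = h *\<^sub>R blinfun_apply f 1" by (rule blinfun.scaleR_right)
  finally show "blinfun_apply f h = blinfun_apply f 1 * h" by simp
qed

lemma bounded_on_compact:
  fixes h :: "'a::metric_space \<Rightarrow> 'b::real_normed_vector"
  assumes "compact S" "continuous_on S h"
  shows "\<exists>B. \<forall>p\<in>S. norm (h p) \<le> B"
proof -
  have "bounded (h ` S)" using assms compact_continuous_image compact_imp_bounded by blast
  then show ?thesis by (auto simp: bounded_iff)
qed

lemma C2_real:
  fixes g :: "real \<Rightarrow> real"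
  assumes "C2_on {a0..a1} g"
  shows "\<exists>g' B. (\<forall>y\<in>{a0..a1}. (g has_real_derivative g' y) (at y within {a0..a1})) \<and>
    (\<forall>u\<in>{a0..a1}. \<forall>v\<in>{a0..a1}. \<bar>g' u - g' v\<bar> \<le> B * \<bar>u - v\<bar>)"
proof -
  obtain h1 :: "real \<Rightarrow> real \<Rightarrow>\<^sub>L real" and h2 :: "real \<Rightarrow> real \<Rightarrow>\<^sub>L (real \<Rightarrow>\<^sub>L real)" where
    d1: "\<forall>p\<in>{a0..a1}. (g has_derivative blinfun_apply (h1 p)) (at p within {a0..a1})" and
    d2: "\<forall>p\<in>{a0..a1}. (h1 has_derivative blinfun_apply (h2 p)) (at p within {a0..a1})" and
    c2: "continuous_on {a0..a1} h2"
    using assms unfolding C2_on_def by blast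
  obtain B where B: "\<forall>p\<in>{a0..a1}. norm (h2 p) \<le> B"
    using bounded_on_compact[OF compact_Icc c2] by blast
  have L: "norm (h1 u - h1 v) \<le> B * norm (u - v)" if "u \<in> {a0..a1}" "v \<in> {a0..a1}" for u v
    by (rule differentiable_bound[where S="{a0..a1}" and f'="\<lambda>p. blinfun_apply (h2 p)"])
       (use d2 B that in \<open>auto simp: norm_blinfun.rep_eq[symmetric]\<close>)
  show ?thesis
  proof (intro exI conjI ballI)
    fix y assume "y \<in> {a0..a1}"
    then show "(g has_real_derivative blinfun_apply (h1 y) 1) (at y within {a0..a1})"
      using d1 unfolding has_field_derivative_def by (metis blin_real)
  next
    fix u v assume uv: "u \<in> {a0..a1}" "v \<in> {a0..a1}"
    have "\<bar>blinfun_apply (h1 u) 1 - blinfun_apply (h1 v) 1\<bar> = norm (blinfun_apply (h1 u - h1 v) 1)"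
      by (simp add: blinfun.diff_left)
    also have "\<dots> \<le> norm (h1 u - h1 v) * norm (1::real)" by (rule norm_blinfun)
    also have "\<dots> \<le> B * \<bar>u - v\<bar>" using L[OF uv] by simp
    finally show "\<bar>blinfun_apply (h1 u) 1 - blinfun_apply (h1 v) 1\<bar> \<le> B * \<bar>u - v\<bar>" .
  qed
qed

lemma norm_pair_sub: "norm ((y::real, z::real) - (y', z')) \<le> \<bar>y - y'\<bar> + \<bar>z - z'\<bar>"
  using norm_Pair_le[of "y - y'" "z - z'"] by simp

lemma C2_pair:
  fixes c :: "real \<Rightarrow> real \<Rightarrow> real"
  assumes "a0 \<le> a1" "C2_on ({a0..a1} \<times> {a0..a1}) (\<lambda>p. c (fst p) (snd p))"
  shows "\<exists>c1 B C. (\<forall>y\<in>{a0..a1}. \<forall>z\<in>{a0..a1}. ((\<lambda>u. c u z) has_real_derivative c1 y z) (at y within {a0..a1})) \<and>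
    (\<forall>y\<in>{a0..a1}. \<forall>z\<in>{a0..a1}. \<forall>y'\<in>{a0..a1}. \<forall>z'\<in>{a0..a1}. \<bar>c1 y z - c1 y' z'\<bar> \<le> B * (\<bar>y - y'\<bar> + \<bar>z - z'\<bar>)) \<and>
    (\<forall>y\<in>{a0..a1}. \<forall>z\<in>{a0..a1}. \<forall>y'\<in>{a0..a1}. \<forall>z'\<in>{a0..a1}. \<bar>c y z - c y' z'\<bar> \<le> C * (\<bar>y - y'\<bar> + \<bar>z - z'\<bar>))"
proof -
  define Q where "Q = {a0..a1} \<times> {a0..a1}"
  have cQ: "compact Q" "convex Q" unfolding Q_def by (auto intro: compact_Times convex_Times)
  obtain h1 :: "(real \<times> real) \<Rightarrow> (real \<times> real) \<Rightarrow>\<^sub>L real" and h2 :: "(real \<times> real) \<Rightarrow> (real \<times> real) \<Rightarrow>\<^sub>L ((real \<times> real) \<Rightarrow>\<^sub>L real)" where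
    d1: "\<forall>p\<in>Q. ((\<lambda>p. c (fst p) (snd p)) has_derivative blinfun_apply (h1 p)) (at p within Q)" and
    d2: "\<forall>p\<in>Q. (h1 has_derivative blinfun_apply (h2 p)) (at p within Q)" and
    c2: "continuous_on Q h2"
    using assms(2) unfolding C2_on_def Q_def by blast
  obtain B where B: "\<forall>p\<in>Q. norm (h2 p) \<le> B"
    using bounded_on_compact[OF cQ(1) c2] by blast
  have L: "norm (h1 u - h1 v) \<le> B * norm (u - v)" if "u \<in> Q" "v \<in> Q" for u v
    by (rule differentiable_bound[where S="Q" and f'="\<lambda>p. blinfun_apply (h2 p)"])
       (use d2 B that cQ in \<open>auto simp: norm_blinfun.rep_eq[symmetric]\<close>)
  have "continuous_on Q h1"
    using d2 has_derivative_continuous continuous_on_eq_continuous_within by blast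
  then obtain C where C: "\<forall>p\<in>Q. norm (h1 p) \<le> C"
    using bounded_on_compact[OF cQ(1)] by blast
  have Lc: "norm (c (fst u) (snd u) - c (fst v) (snd v)) \<le> C * norm (u - v)" if "u \<in> Q" "v \<in> Q" for u v
    by (rule differentiable_bound[where S="Q" and f="\<lambda>p. c (fst p) (snd p)" and f'="\<lambda>p. blinfun_apply (h1 p)"])
       (use d1 C that cQ in \<open>auto simp: norm_blinfun.rep_eq[symmetric]\<close>)
  have "(a0, a0) \<in> Q" using assms(1) by (auto simp: Q_def)
  then have B0: "B \<ge> 0" using B by (meson norm_ge_zero order_trans)
  show ?thesis
  proof (intro exI conjI ballI)
    fix y z assume yz: "y \<in> {a0..a1}" "z \<in> {a0..a1}"
    have dp: "((\<lambda>u. (u, z)) has_derivative (\<lambda>h. (h, 0))) (at y within {a0..a1})"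
      by (auto intro!: derivative_eq_intros)
    have "((\<lambda>u. c (fst (u, z)) (snd (u, z))) has_derivative (\<lambda>h. blinfun_apply (h1 (y, z)) (h, 0))) (at y within {a0..a1})"
      by (rule has_derivative_in_compose2[where t=Q]) (use d1 yz dp in \<open>auto simp: Q_def\<close>)
    moreover have "(\<lambda>h. blinfun_apply (h1 (y, z)) (h, 0)) = (*) (blinfun_apply (h1 (y, z)) (1, 0))"
    proof
      fix h :: real
      have "blinfun_apply (h1 (y, z)) (h, 0) = blinfun_apply (h1 (y, z)) (h *\<^sub>R (1, 0))" by simp
      also have "\<dots> = h *\<^sub>R blinfun_apply (h1 (y, z)) (1, 0)" by (rule blinfun.scaleR_right)
      finally show "blinfun_apply (h1 (y, z)) (h, 0) = blinfun_apply (h1 (y, z)) (1, 0) * h" by simp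
    qed
    ultimately show "((\<lambda>u. c u z) has_real_derivative blinfun_apply (h1 (y, z)) (1, 0)) (at y within {a0..a1})"
      unfolding has_field_derivative_def by simp
  next
    fix y z y' z' assume yz: "y \<in> {a0..a1}" "z \<in> {a0..a1}" "y' \<in> {a0..a1}" "z' \<in> {a0..a1}"
    have "\<bar>blinfun_apply (h1 (y, z)) (1, 0) - blinfun_apply (h1 (y', z')) (1, 0)\<bar>
        = norm (blinfun_apply (h1 (y, z) - h1 (y', z')) (1, 0))"
      by (simp add: blinfun.diff_left)
    also have "\<dots> \<le> norm (h1 (y, z) - h1 (y', z')) * norm ((1::real, 0::real))" by (rule norm_blinfun)
    also have "\<dots> = norm (h1 (y, z) - h1 (y', z'))" by (simp add: norm_Pair)
    also have "\<dots> \<le> B * norm ((y, z) - (y', z'))" using L yz by (auto simp: Q_def)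
    also have "\<dots> \<le> B * (\<bar>y - y'\<bar> + \<bar>z - z'\<bar>)" using B0 norm_pair_sub by (rule mult_left_mono[rotated])
    finally show "\<bar>blinfun_apply (h1 (y, z)) (1, 0) - blinfun_apply (h1 (y', z')) (1, 0)\<bar> \<le> B * (\<bar>y - y'\<bar> + \<bar>z - z'\<bar>)" .
  next
    fix y z y' z' assume yz: "y \<in> {a0..a1}" "z \<in> {a0..a1}" "y' \<in> {a0..a1}" "z' \<in> {a0..a1}"
    have C0: "C \<ge> 0" using C yz unfolding Q_def by (meson SigmaI norm_ge_zero order_trans)
    have "\<bar>c y z - c y' z'\<bar> \<le> C * norm ((y, z) - (y', z'))" using Lc[of "(y,z)" "(y',z')"] yz by (auto simp: Q_def)
    also have "\<dots> \<le> C * (\<bar>y - y'\<bar> + \<bar>z - z'\<bar>)" using C0 norm_pair_sub by (rule mult_left_mono[rotated])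
    finally show "\<bar>c y z - c y' z'\<bar> \<le> C * (\<bar>y - y'\<bar> + \<bar>z - z'\<bar>)" .
  qed
qed

lemma mvt_any:
  fixes g g' :: "real \<Rightarrow> real"
  assumes d: "\<forall>u\<in>{a..b}. (g has_real_derivative g' u) (at u within {a..b})"
    and y: "y \<in> {a..b}" and y': "y' \<in> {a..b}"
  shows "\<exists>\<xi>. \<xi> \<in> {a..b} \<and> \<bar>\<xi> - y\<bar> \<le> \<bar>y' - y\<bar> \<and> g y' - g y = g' \<xi> * (y' - y)"
proof -
  have gen: "\<exists>\<xi>\<in>{p<..<q}. g q - g p = g' \<xi> * (q - p)" if "p < q" "p \<in> {a..b}" "q \<in> {a..b}" for p q
  proof -
    have sub: "{p..q} \<subseteq> {a..b}" using that by auto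
    have "\<exists>\<xi>\<in>{p<..<q}. g q - g p = (*) (g' \<xi>) (q - p)"
    proof (rule mvt_simple[OF \<open>p < q\<close>])
      fix x assume "p \<le> x" "x \<le> q"
      then have "(g has_real_derivative g' x) (at x within {a..b})" using d sub by auto
      then have "(g has_real_derivative g' x) (at x within {p..q})" using sub by (rule DERIV_subset)
      then show "(g has_derivative (*) (g' x)) (at x within {p..q})" by (simp add: has_field_derivative_def)
    qed
    then show ?thesis by simp
  qed
  consider "y < y'" | "y = y'" | "y' < y" by linarith
  then show ?thesis
  proof cases
    case 1
    then obtain \<xi> where "\<xi> \<in> {y<..<y'}" "g y' - g y = g' \<xi> * (y' - y)" using gen y y' by blast
    then show ?thesis using y y' by (intro exI[of _ \<xi>]) auto
  next
    case 2 then show ?thesis using y by auto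
  next
    case 3
    then obtain \<xi> where "\<xi> \<in> {y'<..<y}" "g y - g y' = g' \<xi> * (y - y')" using gen y y' by blast
    then show ?thesis using y y' by (intro exI[of _ \<xi>]) (auto simp: algebra_simps)
  qed
qed

lemma lip_from_bound:
  fixes g g' :: "real \<Rightarrow> real"
  assumes d: "\<forall>u\<in>{a..b}. (g has_real_derivative g' u) (at u within {a..b})"
    and B: "\<forall>u\<in>{a..b}. \<bar>g' u\<bar> \<le> B"
    and y: "y \<in> {a..b}" and y': "y' \<in> {a..b}"
  shows "\<bar>g y' - g y\<bar> \<le> B * \<bar>y' - y\<bar>"
proof -
  obtain \<xi> where "\<xi> \<in> {a..b}" "g y' - g y = g' \<xi> * (y' - y)" using mvt_any[OF d y y'] by blast
  then have "\<bar>g y' - g y\<bar> = \<bar>g' \<xi>\<bar> * \<bar>y' - y\<bar>" by (simp add: abs_mult)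
  also have "\<dots> \<le> B * \<bar>y' - y\<bar>" using B \<open>\<xi> \<in> {a..b}\<close> by (intro mult_right_mono) auto
  finally show ?thesis .
qed

lemma taylor_lip:
  fixes g g' :: "real \<Rightarrow> real"
  assumes d: "\<forall>u\<in>{a..b}. (g has_real_derivative g' u) (at u within {a..b})"
    and L: "\<forall>u\<in>{a..b}. \<forall>v\<in>{a..b}. \<bar>g' u - g' v\<bar> \<le> B * \<bar>u - v\<bar>"
    and B0: "B \<ge> 0"
    and y: "y \<in> {a..b}" and y': "y' \<in> {a..b}"
  shows "\<bar>g y' - g y - (y' - y) * g' y\<bar> \<le> B * (y' - y)\<^sup>2"
proof -
  have d2: "\<forall>u\<in>{a..b}. ((\<lambda>u. g u - u * g' y) has_real_derivative (g' u - g' y)) (at u within {a..b})"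
    using d by (auto intro!: derivative_eq_intros)
  obtain \<xi> where xi: "\<xi> \<in> {a..b}" "\<bar>\<xi> - y\<bar> \<le> \<bar>y' - y\<bar>"
     "(g y' - y' * g' y) - (g y - y * g' y) = (g' \<xi> - g' y) * (y' - y)"
    using mvt_any[OF d2 y y'] by blast
  have "\<bar>g y' - g y - (y' - y) * g' y\<bar> = \<bar>g' \<xi> - g' y\<bar> * \<bar>y' - y\<bar>"
  proof -
    have "g y' - g y - (y' - y) * g' y = (g' \<xi> - g' y) * (y' - y)" using xi(3) by (simp add: algebra_simps)
    then show ?thesis by (simp add: abs_mult)
  qed
  also have "\<dots> \<le> (B * \<bar>\<xi> - y\<bar>) * \<bar>y' - y\<bar>" using L xi y by (intro mult_right_mono) auto
  also have "\<dots> \<le> (B * \<bar>y' - y\<bar>) * \<bar>y' - y\<bar>" using xi B0 by (intro mult_right_mono mult_left_mono) auto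
  also have "\<dots> = B * (y' - y)\<^sup>2" by (simp add: power2_eq_square)
  finally show ?thesis .
qed

definition lipon :: "real set \<Rightarrow> (real \<Rightarrow> real) \<Rightarrow> real \<Rightarrow> bool" where
  "lipon J g L \<longleftrightarrow> (\<forall>u\<in>J. \<forall>v\<in>J. \<bar>g u - g v\<bar> \<le> L * \<bar>u - v\<bar>)"

lemma lipon_cont:
  assumes "lipon J g L" shows "continuous_on J g"
  unfolding continuous_on_iff
proof (intro ballI allI impI)
  fix x e assume x: "x \<in> J" and e: "(0::real) < e"
  show "\<exists>d>0. \<forall>x'\<in>J. dist x' x < d \<longrightarrow> dist (g x') (g x) < e"
  proof (intro exI[of _ "e / (\<bar>L\<bar> + 1)"] conjI ballI impI)
    show "e / (\<bar>L\<bar> + 1) > 0" using e by simp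
    fix x' assume x': "x' \<in> J" and dx: "dist x' x < e / (\<bar>L\<bar> + 1)"
    have "dist (g x') (g x) \<le> L * \<bar>x' - x\<bar>" using assms x x' by (simp add: lipon_def dist_real_def)
    also have "\<dots> \<le> \<bar>L\<bar> * \<bar>x' - x\<bar>" by (intro mult_right_mono) auto
    also have "\<dots> \<le> (\<bar>L\<bar> + 1) * \<bar>x' - x\<bar>" by (intro mult_right_mono) auto
    also have "\<dots> < (\<bar>L\<bar> + 1) * (e / (\<bar>L\<bar> + 1))"
      using dx by (intro mult_strict_left_mono) (auto simp: dist_real_def)
    also have "\<dots> = e" by simp
    finally show "dist (g x') (g x) < e" .
  qed
qed

lemma lipon_bound:
  assumes "lipon {a..b} g L" shows "\<exists>B. \<forall>u\<in>{a..b}. \<bar>g u\<bar> \<le> B"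
proof -
  have "compact {a..b}" by simp
  then show ?thesis using bounded_on_compact[OF _ lipon_cont[OF assms]] by auto
qed

lemma lipon_nonneg:
  assumes "lipon {a..b} g L" "a < b" shows "lipon {a..b} g (max L 0)"
  using assms(1) unfolding lipon_def
  by (meson abs_ge_zero max.cobounded1 mult_right_mono order_trans)

lemma lipon_diff:
  assumes "lipon J f Lf" "lipon J g Lg" shows "lipon J (\<lambda>u. f u - g u) (Lf + Lg)"
  using assms unfolding lipon_def
proof (intro ballI)
  fix u v assume a: "\<forall>u\<in>J. \<forall>v\<in>J. \<bar>f u - f v\<bar> \<le> Lf * \<bar>u - v\<bar>" "\<forall>u\<in>J. \<forall>v\<in>J. \<bar>g u - g v\<bar> \<le> Lg * \<bar>u - v\<bar>"
    and uv: "u \<in> J" "v \<in> J"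
  have "\<bar>f u - g u - (f v - g v)\<bar> \<le> \<bar>f u - f v\<bar> + \<bar>g u - g v\<bar>" by linarith
  also have "\<dots> \<le> Lf * \<bar>u - v\<bar> + Lg * \<bar>u - v\<bar>" using a uv by (intro add_mono) auto
  finally show "\<bar>f u - g u - (f v - g v)\<bar> \<le> (Lf + Lg) * \<bar>u - v\<bar>" by (simp add: algebra_simps)
qed

lemma lipon_mult:
  assumes "lipon J f Lf" "lipon J g Lg" "\<forall>u\<in>J. \<bar>f u\<bar> \<le> Fb" "\<forall>u\<in>J. \<bar>g u\<bar> \<le> Gb"
    "Lf \<ge> 0" "Lg \<ge> 0"
  shows "lipon J (\<lambda>u. f u * g u) (Lf * Gb + Fb * Lg)"
  unfolding lipon_def
proof (intro ballI)
  fix u v assume uv: "u \<in> J" "v \<in> J"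
  have "f u * g u - f v * g v = (f u - f v) * g u + f v * (g u - g v)" by (simp add: algebra_simps)
  then have "\<bar>f u * g u - f v * g v\<bar> \<le> \<bar>f u - f v\<bar> * \<bar>g u\<bar> + \<bar>f v\<bar> * \<bar>g u - g v\<bar>"
    by (metis abs_mult abs_triangle_ineq)
  also have "\<dots> \<le> (Lf * \<bar>u - v\<bar>) * Gb + Fb * (Lg * \<bar>u - v\<bar>)"
    using assms uv unfolding lipon_def
    by (intro add_mono mult_mono) (auto intro: order_trans[OF abs_ge_zero])
  finally show "\<bar>f u * g u - f v * g v\<bar> \<le> (Lf * Gb + Fb * Lg) * \<bar>u - v\<bar>" by (simp add: algebra_simps)
qed

lemma lipon_div:
  assumes "lipon J p Lp" "lipon J q Lq" "\<forall>u\<in>J. \<bar>p u\<bar> \<le> P" "\<forall>u\<in>J. \<bar>q u\<bar> \<le> Qb"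
    "\<forall>u\<in>J. q u \<ge> qm" "qm > 0" "Lp \<ge> 0" "Lq \<ge> 0"
  shows "lipon J (\<lambda>u. p u / q u) ((Lp * Qb + P * Lq) / qm\<^sup>2)"
  unfolding lipon_def
proof (intro ballI)
  fix u v assume uv: "u \<in> J" "v \<in> J"
  have qu: "q u \<ge> qm" "q v \<ge> qm" using assms uv by auto
  then have qp: "q u > 0" "q v > 0" using assms by auto
  have "p u / q u - p v / q v = ((p u - p v) * q v + p v * (q v - q u)) / (q u * q v)"
    using qp by (simp add: field_simps)
  then have "\<bar>p u / q u - p v / q v\<bar> = \<bar>(p u - p v) * q v + p v * (q v - q u)\<bar> / (q u * q v)"
    using qp by (simp add: abs_mult)
  also have "\<dots> \<le> \<bar>(p u - p v) * q v + p v * (q v - q u)\<bar> / qm\<^sup>2"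
  proof (rule divide_left_mono)
    show "qm\<^sup>2 \<le> q u * q v" using qu assms(6) by (simp add: power2_eq_square mult_mono)
    show "0 < q u * q v * qm\<^sup>2" using qp assms(6) by simp
  qed simp
  also have "\<bar>(p u - p v) * q v + p v * (q v - q u)\<bar> \<le> \<bar>p u - p v\<bar> * \<bar>q v\<bar> + \<bar>p v\<bar> * \<bar>q v - q u\<bar>"
    by (metis abs_mult abs_triangle_ineq)
  also have "\<dots> \<le> (Lp * \<bar>u - v\<bar>) * Qb + P * (Lq * \<bar>u - v\<bar>)"
    using assms uv unfolding lipon_def
    by (intro add_mono mult_mono) (auto intro: order_trans[OF abs_ge_zero] simp: abs_minus_commute)
  finally show "\<bar>p u / q u - p v / q v\<bar> \<le> (Lp * Qb + P * Lq) / qm\<^sup>2 * \<bar>u - v\<bar>"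
    using assms(6) by (simp add: divide_right_mono algebra_simps)
qed

lemma lipon_C2:
  fixes g :: "real \<Rightarrow> real"
  assumes "a0 < a1" "C2_on {a0..a1} g"
  shows "\<exists>g' B B1. B \<ge> 0 \<and> B1 \<ge> 0 \<and> (\<forall>y\<in>{a0..a1}. (g has_real_derivative g' y) (at y within {a0..a1})) \<and>
    lipon {a0..a1} g' B \<and> lipon {a0..a1} g B1 \<and> (\<forall>u\<in>{a0..a1}. \<bar>g' u\<bar> \<le> B1)"
proof -
  obtain g' B where d: "\<forall>y\<in>{a0..a1}. (g has_real_derivative g' y) (at y within {a0..a1})"
    and L: "lipon {a0..a1} g' B"
    using C2_real[OF assms(2)] unfolding lipon_def by blast
  have L': "lipon {a0..a1} g' (max B 0)" using lipon_nonneg[OF L assms(1)] .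
  obtain B1 where B1: "\<forall>u\<in>{a0..a1}. \<bar>g' u\<bar> \<le> B1" using lipon_bound[OF L] by blast
  have "lipon {a0..a1} g (max B1 0)" unfolding lipon_def
  proof (intro ballI)
    fix u v assume "u \<in> {a0..a1}" "v \<in> {a0..a1}"
    have "\<bar>g u - g v\<bar> \<le> (max B1 0) * \<bar>u - v\<bar>"
      by (rule lip_from_bound[OF d]) (use B1 \<open>u \<in> _\<close> \<open>v \<in> _\<close> in \<open>auto intro: order_trans\<close>)
    then show "\<bar>g u - g v\<bar> \<le> max B1 0 * \<bar>u - v\<bar>" .
  qed
  then show ?thesis using d L' B1
    by (intro exI[of _ g'] exI[of _ "max B 0"] exI[of _ "max B1 0"]) auto
qed

lemma smooth_pkg:
  fixes b d :: "real \<Rightarrow> real" and c :: "real \<Rightarrow> real \<Rightarrow> real"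
  assumes I_ne: "a0 < a1"
    and b_C2: "C2_on {a0..a1} b" and d_C2: "C2_on {a0..a1} d"
    and c_C2: "C2_on ({a0..a1} \<times> {a0..a1}) (\<lambda>p. c (fst p) (snd p))"
    and coexist: "\<forall>y\<in>{a0..a1}. b y > d y \<and> c y y > 0"
  shows "\<exists>s M Ls S. M \<ge> 0 \<and> Ls \<ge> 0 \<and> S > 0 \<and>
     (\<forall>y\<in>{a0..a1}. ((\<lambda>u. fit b d c u y) has_real_derivative s y) (at y within {a0..a1})) \<and>
     (\<forall>y\<in>{a0..a1}. \<forall>y'\<in>{a0..a1}. \<bar>fit b d c y' y - (y' - y) * s y\<bar> \<le> M * (y' - y)\<^sup>2) \<and>
     lipon {a0..a1} s Ls \<and> (\<forall>y\<in>{a0..a1}. \<bar>s y\<bar> \<le> S)"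
proof -
  define J where "J = {a0..a1}"
  obtain b' Bb Bb1 where bB: "Bb \<ge> 0" "Bb1 \<ge> 0" and bd: "\<forall>y\<in>J. (b has_real_derivative b' y) (at y within J)"
    and bL: "lipon J b' Bb" "lipon J b Bb1"
    using lipon_C2[OF I_ne b_C2] unfolding J_def by blast
  obtain d' Bd Bd1 where dB: "Bd \<ge> 0" "Bd1 \<ge> 0" and dd: "\<forall>y\<in>J. (d has_real_derivative d' y) (at y within J)"
    and dL: "lipon J d' Bd" "lipon J d Bd1"
    using lipon_C2[OF I_ne d_C2] unfolding J_def by blast
  obtain c1 Bc0 Cc0 where cd: "\<forall>y\<in>J. \<forall>z\<in>J. ((\<lambda>u. c u z) has_real_derivative c1 y z) (at y within J)"
    and c1L0: "\<forall>y\<in>J. \<forall>z\<in>J. \<forall>y'\<in>J. \<forall>z'\<in>J. \<bar>c1 y z - c1 y' z'\<bar> \<le> Bc0 * (\<bar>y - y'\<bar> + \<bar>z - z'\<bar>)"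
    and cL0: "\<forall>y\<in>J. \<forall>z\<in>J. \<forall>y'\<in>J. \<forall>z'\<in>J. \<bar>c y z - c y' z'\<bar> \<le> Cc0 * (\<bar>y - y'\<bar> + \<bar>z - z'\<bar>)"
    using C2_pair[of a0 a1 c] I_ne c_C2 unfolding J_def by auto
  define Bc where "Bc = max Bc0 0"
  define Cc where "Cc = max Cc0 0"
  have Bc0: "Bc \<ge> 0" "Cc \<ge> 0" unfolding Bc_def Cc_def by auto
  have c1L: "\<bar>c1 y z - c1 y' z'\<bar> \<le> Bc * (\<bar>y - y'\<bar> + \<bar>z - z'\<bar>)" if "y\<in>J" "z\<in>J" "y'\<in>J" "z'\<in>J" for y z y' z'
    using c1L0 that unfolding Bc_def by (meson add_nonneg_nonneg abs_ge_zero max.cobounded1 mult_right_mono order_trans)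
  have cL: "\<bar>c y z - c y' z'\<bar> \<le> Cc * (\<bar>y - y'\<bar> + \<bar>z - z'\<bar>)" if "y\<in>J" "z\<in>J" "y'\<in>J" "z'\<in>J" for y z y' z'
    using cL0 that unfolding Cc_def by (meson add_nonneg_nonneg abs_ge_zero max.cobounded1 mult_right_mono order_trans)
  define p where "p = (\<lambda>z. b z - d z)"
  define q where "q = (\<lambda>z. c z z)"
  have pL: "lipon J p (Bb1 + Bd1)" unfolding p_def by (rule lipon_diff[OF bL(2) dL(2)])
  have qL: "lipon J q (2 * Cc)" unfolding lipon_def q_def
  proof (intro ballI)
    fix u v assume "u \<in> J" "v \<in> J"
    then have "\<bar>c u u - c v v\<bar> \<le> Cc * (\<bar>u - v\<bar> + \<bar>u - v\<bar>)" using cL by blast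
    then show "\<bar>c u u - c v v\<bar> \<le> 2 * Cc * \<bar>u - v\<bar>" by simp
  qed
  obtain P where P: "\<forall>u\<in>J. \<bar>p u\<bar> \<le> P" using lipon_bound[of a0 a1 p] pL unfolding J_def by blast
  obtain Qb where Qb: "\<forall>u\<in>J. \<bar>q u\<bar> \<le> Qb" using lipon_bound[of a0 a1 q] qL unfolding J_def by blast
  obtain z0 where z0: "z0 \<in> J" "\<forall>y\<in>J. q z0 \<le> q y"
    using continuous_attains_inf[of J q] lipon_cont[OF qL] I_ne unfolding J_def by auto
  define qm where "qm = q z0"
  have qm: "qm > 0" "\<forall>u\<in>J. q u \<ge> qm" using z0 coexist unfolding qm_def q_def J_def by auto
  define h where "h = (\<lambda>u. p u / q u)"
  have hL: "lipon J h (((Bb1 + Bd1) * Qb + P * (2 * Cc)) / qm\<^sup>2)" unfolding h_def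
    by (rule lipon_div[OF pL qL P Qb qm(2) qm(1)]) (use bB dB Bc0 in auto)
  obtain H where H: "\<forall>u\<in>J. \<bar>h u\<bar> \<le> H" using lipon_bound[of a0 a1 h] hL unfolding J_def by blast
  have H0: "H \<ge> 0" using H z0 by (meson abs_ge_zero order_trans)
  define cd1 where "cd1 = (\<lambda>y. c1 y y)"
  have cdL: "lipon J cd1 (2 * Bc)" unfolding lipon_def cd1_def
  proof (intro ballI)
    fix u v assume "u \<in> J" "v \<in> J"
    then have "\<bar>c1 u u - c1 v v\<bar> \<le> Bc * (\<bar>u - v\<bar> + \<bar>u - v\<bar>)" using c1L by blast
    then show "\<bar>c1 u u - c1 v v\<bar> \<le> 2 * Bc * \<bar>u - v\<bar>" by simp
  qed
  obtain CD where CD: "\<forall>u\<in>J. \<bar>cd1 u\<bar> \<le> CD" using lipon_bound[of a0 a1 cd1] cdL unfolding J_def by blast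
  have PQ0: "P \<ge> 0" "Qb \<ge> 0" using P Qb z0 by (meson abs_ge_zero order_trans)+
  have Lh0: "((Bb1 + Bd1) * Qb + P * (2 * Cc)) / qm\<^sup>2 \<ge> 0"
    using PQ0 bB dB Bc0 qm by (intro divide_nonneg_pos add_nonneg_nonneg mult_nonneg_nonneg) auto
  define s where "s = (\<lambda>y. b' y - d' y - c1 y y * h y)"
  have sL0: "lipon J s (Bb + Bd + (2 * Bc * H + CD * (((Bb1 + Bd1) * Qb + P * (2 * Cc)) / qm\<^sup>2)))"
    unfolding s_def
    apply (rule lipon_diff[OF lipon_diff[OF bL(1) dL(1)]])
    using lipon_mult[OF cdL hL CD H] bB dB Bc0 qm Lh0 unfolding cd1_def
    by auto
  define Ls where "Ls = max (Bb + Bd + (2 * Bc * H + CD * (((Bb1 + Bd1) * Qb + P * (2 * Cc)) / qm\<^sup>2))) 0"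
  have sL: "lipon J s Ls" unfolding Ls_def J_def by (rule lipon_nonneg[OF sL0[unfolded J_def] I_ne])
  obtain S0 where S0: "\<forall>u\<in>J. \<bar>s u\<bar> \<le> S0" using lipon_bound[of a0 a1 s] sL unfolding J_def by blast
  have fit_eq: "fit b d c u z = b u - d u - c u z * h z" for u z
    unfolding fit_def h_def p_def q_def by simp
  define g' where "g' = (\<lambda>z u. b' u - d' u - c1 u z * h z)"
  have gd: "((\<lambda>u. fit b d c u z) has_real_derivative g' z u) (at u within J)" if "z \<in> J" "u \<in> J" for z u
  proof -
    have "((\<lambda>u. b u - d u - c u z * h z) has_real_derivative g' z u) (at u within J)"
      unfolding g'_def using bd dd cd that by (auto intro!: derivative_eq_intros)
    then show ?thesis unfolding fit_eq .
  qed
  define M where "M = Bb + Bd + Bc * H"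
  have M0: "M \<ge> 0" unfolding M_def using bB dB Bc0 H0 by simp
  have tay: "\<bar>fit b d c y' y - (y' - y) * s y\<bar> \<le> M * (y' - y)\<^sup>2" if y: "y \<in> J" "y' \<in> J" for y y'
  proof -
    have gl: "\<forall>u\<in>{a0..a1}. \<forall>v\<in>{a0..a1}. \<bar>g' y u - g' y v\<bar> \<le> M * \<bar>u - v\<bar>"
    proof (intro ballI)
      fix u v assume uv: "u \<in> {a0..a1}" "v \<in> {a0..a1}"
      have "g' y u - g' y v = (b' u - b' v) - (d' u - d' v) - (c1 u y - c1 v y) * h y"
        unfolding g'_def by (simp add: algebra_simps)
      then have "\<bar>g' y u - g' y v\<bar> \<le> \<bar>b' u - b' v\<bar> + \<bar>d' u - d' v\<bar> + \<bar>c1 u y - c1 v y\<bar> * \<bar>h y\<bar>"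
        by (simp only: abs_mult[symmetric])
      also have "\<dots> \<le> Bb * \<bar>u - v\<bar> + Bd * \<bar>u - v\<bar> + (Bc * \<bar>u - v\<bar>) * H"
        using bL(1) dL(1) c1L[of u y v y] H y uv unfolding lipon_def J_def
        by (intro add_mono mult_mono) auto
      finally show "\<bar>g' y u - g' y v\<bar> \<le> M * \<bar>u - v\<bar>" unfolding M_def by (simp add: algebra_simps)
    qed
    have "\<bar>fit b d c y' y - fit b d c y y - (y' - y) * g' y y\<bar> \<le> M * (y' - y)\<^sup>2"
      by (rule taylor_lip[where g'="g' y" and a=a0 and b=a1, OF _ gl M0])
         (use gd y in \<open>auto simp: J_def\<close>)
    moreover have "fit b d c y y = 0" proof - have "c y y > 0" using coexist y unfolding J_def by auto then show ?thesis unfolding fit_def by simp qed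
    moreover have "g' y y = s y" unfolding g'_def s_def ..
    ultimately show ?thesis by simp
  qed
  show ?thesis
    apply (rule exI[of _ s], rule exI[of _ M], rule exI[of _ Ls], rule exI[of _ "\<bar>S0\<bar> + 1"])
    using M0 sL S0 tay gd unfolding J_def g'_def s_def Ls_def
    by (auto simp: g'_def)
qed

lemma x_mvt:
  fixes x s :: "real \<Rightarrow> real"
  assumes xd: "\<forall>t\<in>{0..T}. (x has_real_derivative s (x t)) (at t within {0..T})"
    and uv: "0 \<le> u" "u \<le> v" "v \<le> T"
  shows "\<exists>\<xi>\<in>{u..v}. x v - x u = s (x \<xi>) * (v - u)"
proof -
  have "\<forall>t\<in>{u..v}. (x has_real_derivative s (x t)) (at t within {u..v})"
  proof
    fix t assume "t \<in> {u..v}"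
    then have "(x has_real_derivative s (x t)) (at t within {0..T})" using xd uv by auto
    then show "(x has_real_derivative s (x t)) (at t within {u..v})" by (rule DERIV_subset) (use uv in auto)
  qed
  from mvt_any[OF this, of u v] uv obtain \<xi> where "\<xi> \<in> {u..v}" "x v - x u = s (x \<xi>) * (v - u)"
    by auto
  then show ?thesis by blast
qed

lemma x_cont:
  fixes x s :: "real \<Rightarrow> real"
  assumes xd: "\<forall>t\<in>{0..T}. (x has_real_derivative s (x t)) (at t within {0..T})"
  shows "continuous_on {0..T} x"
  using xd by (metis DERIV_continuous continuous_on_eq_continuous_within)

lemma gronwall_zero:
  fixes x s :: "real \<Rightarrow> real"
  assumes xd: "\<forall>t\<in>{0..T}. (x has_real_derivative s (x t)) (at t within {0..T})"
    and xr: "\<forall>t\<in>{0..T}. x t \<in> J"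
    and sL: "lipon J s Ls" and Ls0: "Ls \<ge> 0"
    and z: "z \<in> J" "s z = 0" and t2: "t2 \<in> {0..T}" "x t2 = z"
    and t: "t \<in> {0..T}"
  shows "x t = z"
proof -
  have key: "(x u - z) * s (x u) \<le> Ls * ((x u - z) * (x u - z))" "-(Ls * ((x u - z) * (x u - z))) \<le> (x u - z) * s (x u)" if "u \<in> {0..T}" for u
  proof -
    have "x u \<in> J" using xr that by auto
    then have "\<bar>s (x u) - s z\<bar> \<le> Ls * \<bar>x u - z\<bar>" using sL z unfolding lipon_def by blast
    then have "\<bar>(x u - z) * s (x u)\<bar> \<le> \<bar>x u - z\<bar> * (Ls * \<bar>x u - z\<bar>)"
      using z by (simp add: abs_mult mult_left_mono)
    also have "\<dots> = Ls * ((x u - z) * (x u - z))" by (simp add: abs_mult_self algebra_simps)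
    finally show "(x u - z) * s (x u) \<le> Ls * ((x u - z) * (x u - z))" "-(Ls * ((x u - z) * (x u - z))) \<le> (x u - z) * s (x u)"
      by linarith+
  qed
  define w where "w = (\<lambda>c u. (x u - z) * (x u - z) * exp (c * u))"
  have wd: "\<forall>u\<in>{0..T}. (w c has_real_derivative (2 * ((x u - z) * s (x u)) + c * ((x u - z) * (x u - z))) * exp (c * u)) (at u within {0..T})" for c
    unfolding w_def using xd by (auto intro!: derivative_eq_intros simp: algebra_simps)
  have w0: "w c u \<ge> 0" for c u unfolding w_def by simp
  have wz: "w c u = 0 \<Longrightarrow> x u = z" for c u unfolding w_def by simp
  have "w c t2 = 0" for c unfolding w_def using t2 by simp
  consider "t2 \<le> t" | "t \<le> t2" by linarith
  then show ?thesis
  proof cases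
    case 1
    obtain \<xi> where xi: "\<xi> \<in> {0..T}" "w (-2*Ls) t - w (-2*Ls) t2 = (2 * ((x \<xi> - z) * s (x \<xi>)) + (-2*Ls) * ((x \<xi> - z) * (x \<xi> - z))) * exp ((-2*Ls) * \<xi>) * (t - t2)"
      using mvt_any[OF wd[of "-2*Ls"] t2(1) t] by blast
    have "(2 * ((x \<xi> - z) * s (x \<xi>)) + (-2*Ls) * ((x \<xi> - z) * (x \<xi> - z))) * exp ((-2*Ls) * \<xi>) * (t - t2) \<le> 0"
      using key(1)[OF xi(1)] 1 by (intro mult_nonpos_nonneg) (auto intro!: mult_nonpos_nonneg)
    then have "w (-2*Ls) t \<le> 0" using xi(2) \<open>\<And>c. w c t2 = 0\<close> by simp
    then show ?thesis using w0 wz by (meson antisym)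
  next
    case 2
    obtain \<xi> where xi: "\<xi> \<in> {0..T}" "w (2*Ls) t2 - w (2*Ls) t = (2 * ((x \<xi> - z) * s (x \<xi>)) + (2*Ls) * ((x \<xi> - z) * (x \<xi> - z))) * exp ((2*Ls) * \<xi>) * (t2 - t)"
      using mvt_any[OF wd[of "2*Ls"] t t2(1)] by blast
    have "(2 * ((x \<xi> - z) * s (x \<xi>)) + (2*Ls) * ((x \<xi> - z) * (x \<xi> - z))) * exp ((2*Ls) * \<xi>) * (t2 - t) \<ge> 0"
      using key(2)[OF xi(1)] 2 by (intro mult_nonneg_nonneg) auto
    then have "w (2*Ls) t \<le> 0" using xi(2) \<open>\<And>c. w c t2 = 0\<close> by simp
    then show ?thesis using w0 wz by (meson antisym)
  qed
qed

lemma reached_point: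
  assumes "reached J F x0 \<delta> t' i" "k \<le> i" "x0 \<in> J"
  shows "x0 + real k * \<delta> \<in> J"
proof (cases k)
  case 0 then show ?thesis using assms by simp
next
  case (Suc j)
  then have "j < i" using assms by simp
  then show ?thesis using assms(1) Suc unfolding reached_def by blast
qed

lemma R_max:
  fixes F :: "real \<Rightarrow> real \<Rightarrow> real"
  assumes d: "\<delta> > 0" and t: "t' \<ge> 0" and x0: "x0 \<in> {a0..a1}"
  defines "R \<equiv> {i. reached {a0..a1} F x0 \<delta> t' i}"
  shows "Max R \<in> R" "\<forall>i\<in>R. i \<le> Max R" "0 \<in> R"
proof -
  have sub: "R \<subseteq> {..nat \<lceil>(a1 - x0) / \<delta>\<rceil>}"
  proof
    fix i assume "i \<in> R"
    then have "x0 + real i * \<delta> \<in> {a0..a1}" using reached_point[of "{a0..a1}" F x0 \<delta> t' i i] x0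
      unfolding R_def by auto
    then have "real i * \<delta> \<le> a1 - x0" by auto
    then have "real i \<le> (a1 - x0) / \<delta>" using d by (simp add: field_simps)
    then have "real i \<le> real (nat \<lceil>(a1 - x0) / \<delta>\<rceil>)" by linarith
    then show "i \<in> {..nat \<lceil>(a1 - x0) / \<delta>\<rceil>}" by simp
  qed
  have fin: "finite R" using sub finite_subset by blast
  show z: "0 \<in> R" unfolding R_def reached_def using t by simp
  show "Max R \<in> R" using fin z Max_in by blast
  show "\<forall>i\<in>R. i \<le> Max R" using fin by simp
qed

lemma reached_iff:
  assumes "\<delta> > 0"
  shows "reached J F x0 \<delta> (t / \<delta>\<^sup>2) i \<longleftrightarrow>
    (\<forall>k<i. x0 + real (Suc k) * \<delta> \<in> J \<and> F (x0 + real (Suc k) * \<delta>) (x0 + real k * \<delta>) > 0) \<and>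
    t \<ge> (\<Sum>k<i. \<delta>\<^sup>2 / F (x0 + real (Suc k) * \<delta>) (x0 + real k * \<delta>))"
proof -
  have "(\<Sum>k<i. \<delta>\<^sup>2 / F (x0 + real (Suc k) * \<delta>) (x0 + real k * \<delta>)) = \<delta>\<^sup>2 * (\<Sum>k<i. 1 / F (x0 + real (Suc k) * \<delta>) (x0 + real k * \<delta>))"
    by (simp add: sum_distrib_left)
  moreover have "(t / \<delta>\<^sup>2 \<ge> X) \<longleftrightarrow> (t \<ge> \<delta>\<^sup>2 * X)" for X using assms by (simp add: field_simps)
  ultimately show ?thesis unfolding reached_def by simp
qed

lemma caseA_bound:
  fixes F :: "real \<Rightarrow> real \<Rightarrow> real" and s :: "real \<Rightarrow> real"
  assumes d: "\<delta> > 0" and t: "0 \<le> t" "t \<le> T" and x0: "x0 \<in> {a0..a1}"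
    and tay: "\<forall>y\<in>{a0..a1}. \<forall>y'\<in>{a0..a1}. \<bar>F y' y - (y' - y) * s y\<bar> \<le> M * (y' - y)\<^sup>2"
    and sL: "lipon {a0..a1} s Ls" and s0: "s x0 = 0" and M0: "M \<ge> 0" and Ls0: "Ls \<ge> 0"
    and R: "reached {a0..a1} F x0 \<delta> (t / \<delta>\<^sup>2) i"
  shows "real i + 1 \<le> exp ((Ls + M + 1) * T)"
proof -
  define A where "A = Ls + M + 1"
  have A0: "A > 0" unfolding A_def using M0 Ls0 by simp
  let ?y = "\<lambda>k. x0 + real k * \<delta>"
  have val: "\<forall>k<i. ?y (Suc k) \<in> {a0..a1} \<and> F (?y (Suc k)) (?y k) > 0"
    and sm: "t \<ge> (\<Sum>k<i. \<delta>\<^sup>2 / F (?y (Suc k)) (?y k))"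
    using R reached_iff[OF d] by blast+
  have bnd: "\<delta>\<^sup>2 / F (?y (Suc k)) (?y k) \<ge> inverse (real (Suc k)) / A" if k: "k < i" for k
  proof -
    have yk: "?y k \<in> {a0..a1}" using reached_point[OF R, of k] k x0 by simp
    have yk1: "?y (Suc k) \<in> {a0..a1}" using val k by blast
    have Fp: "F (?y (Suc k)) (?y k) > 0" using val k by blast
    have "\<bar>F (?y (Suc k)) (?y k) - \<delta> * s (?y k)\<bar> \<le> M * \<delta>\<^sup>2"
      using tay yk yk1 by (force simp: algebra_simps)
    moreover have "\<bar>s (?y k) - s x0\<bar> \<le> Ls * \<bar>?y k - x0\<bar>" using sL yk x0 unfolding lipon_def by blast
    then have "s (?y k) \<le> Ls * (real k * \<delta>)" using s0 d by (simp add: abs_mult)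
    ultimately have "F (?y (Suc k)) (?y k) \<le> \<delta> * (Ls * (real k * \<delta>)) + M * \<delta>\<^sup>2"
      using d by (smt (verit, ccfv_SIG) mult_left_mono)
    also have "\<dots> \<le> \<delta>\<^sup>2 * (A * real (Suc k))"
      unfolding A_def using d M0 Ls0 by (simp add: power2_eq_square algebra_simps mult_nonneg_nonneg)
    finally have Fle: "F (?y (Suc k)) (?y k) \<le> \<delta>\<^sup>2 * (A * real (Suc k))" .
    have sk: "real (Suc k) > 0" by simp
    have "\<delta>\<^sup>2 / (\<delta>\<^sup>2 * (A * real (Suc k))) = 1 / (A * real (Suc k))" using d by (intro nonzero_divide_mult_cancel_left) simp
    also have "\<dots> = inverse (real (Suc k)) / A" using A0 sk by (simp add: field_simps)
    finally have "inverse (real (Suc k)) / A = \<delta>\<^sup>2 / (\<delta>\<^sup>2 * (A * real (Suc k)))" by simp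
    also have "\<dots> \<le> \<delta>\<^sup>2 / F (?y (Suc k)) (?y k)" using Fp Fle d by (intro divide_left_mono) auto
    finally show ?thesis .
  qed
  have "ln (real i + 1) / A \<le> harm i / A" using ln_le_harm A0 by (simp add: divide_right_mono)
  also have "harm i / A = (\<Sum>k<i. inverse (real (Suc k)) / A)" by (simp add: harm_altdef sum_divide_distrib)
  also have "\<dots> \<le> (\<Sum>k<i. \<delta>\<^sup>2 / F (?y (Suc k)) (?y k))" using bnd by (intro sum_mono) auto
  also have "\<dots> \<le> T" using sm t by linarith
  finally have "ln (real i + 1) \<le> A * T" using A0 by (simp add: field_simps)
  then have "exp (ln (real i + 1)) \<le> exp (A * T)" by (simp only: exp_le_cancel_iff)
  then show ?thesis unfolding A_def by (smt (verit) exp_ln of_nat_0_le_iff)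
qed

lemma caseB:
  fixes F :: "real \<Rightarrow> real \<Rightarrow> real" and s x :: "real \<Rightarrow> real"
  assumes T0: "T > 0"
    and xd: "\<forall>t\<in>{0..T}. (x has_real_derivative s (x t)) (at t within {0..T})"
    and xr: "\<forall>t\<in>{0..T}. x t \<in> {a0..a1}"
    and x0: "x 0 = x0"
    and m: "m > 0" "\<forall>t\<in>{0..T}. s (x t) \<ge> m"
    and tay: "\<forall>y\<in>{a0..a1}. \<forall>y'\<in>{a0..a1}. \<bar>F y' y - (y' - y) * s y\<bar> \<le> M * (y' - y)\<^sup>2"
    and sL: "lipon {a0..a1} s Ls" and Ls0: "Ls \<ge> 0" and M0: "M \<ge> 0"
    and S: "\<forall>y\<in>{a0..a1}. \<bar>s y\<bar> \<le> S" "S > 0"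
    and d: "\<delta> > 0" "\<delta> \<le> 1" "M * \<delta> \<le> m / 2"
    and t: "t \<in> {0..T}"
  defines "C \<equiv> 2 * (Ls + M) / m\<^sup>2"
  defines "E0 \<equiv> C * (a1 - a0)"
  shows "\<bar>resident {a0..a1} F x0 \<delta> (t / \<delta>\<^sup>2) - x t\<bar> \<le> ((S + M) * (1 / m + E0) + S * E0 + 1) * \<delta>"
proof -
  define J where "J = {a0..a1}"
  define y where "y = (\<lambda>k::nat. x0 + real k * \<delta>)"
  define Fk where "Fk = (\<lambda>k. F (y (Suc k)) (y k))"
  define \<tau> where "\<tau> = (\<lambda>i. \<Sum>k<i. \<delta>\<^sup>2 / Fk k)"
  have ySuc: "y (Suc k) = y k + \<delta>" for k unfolding y_def by (simp add: algebra_simps)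
  have x0J: "x0 \<in> J" using xr x0 T0 unfolding J_def by force
  have xinc: "m * (v - u) \<le> x v - x u \<and> x v - x u \<le> S * (v - u)" if uv: "0 \<le> u" "u \<le> v" "v \<le> T" for u v
  proof -
    obtain \<xi> where xi: "\<xi> \<in> {u..v}" "x v - x u = s (x \<xi>) * (v - u)" using x_mvt[OF xd uv] by blast
    have "\<xi> \<in> {0..T}" using xi uv by auto
    then have "s (x \<xi>) \<ge> m" "\<bar>s (x \<xi>)\<bar> \<le> S" using m S xr by auto
    then show ?thesis using xi uv by (auto intro: mult_right_mono)
  qed
  have xstrict: "x u < x v" if "0 \<le> u" "u < v" "v \<le> T" for u v
    using xinc[of u v] that m by (smt (verit) mult_pos_pos)
  have xle_imp: "u \<le> v" if "u \<in> {0..T}" "v \<in> {0..T}" "x u \<le> x v" for u v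
    using xstrict[of v u] that by force
  have xmono: "x u \<le> x v" if "0 \<le> u" "u \<le> v" "v \<le> T" for u v
    using xinc[OF that] m that by (smt (verit) mult_nonneg_nonneg)
  have xc: "continuous_on {0..T} x" by (rule x_cont[OF xd])
  have xT: "x T \<le> a1" "x0 \<le> x T" using xr T0 xmono[of 0 T] x0 by auto
  have ex_th: "\<exists>\<theta>. \<theta> \<in> {0..T} \<and> x \<theta> = v" if "x0 \<le> v" "v \<le> x T" for v
    using IVT'[of x 0 v T] xc that x0 T0 by auto
  define th where "th = (\<lambda>v. SOME \<theta>. \<theta> \<in> {0..T} \<and> x \<theta> = v)"
  have th: "th v \<in> {0..T}" "x (th v) = v" if "x0 \<le> v" "v \<le> x T" for v
    using someI_ex[OF ex_th[OF that]] unfolding th_def by auto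
  have th0: "th x0 = 0"
  proof -
    have "th x0 \<in> {0..T}" "x (th x0) = x0" using th[of x0] xT by auto
    then show ?thesis using xle_imp[of "th x0" 0] x0 T0 by force
  qed
  have sy: "s v \<ge> m" if "x0 \<le> v" "v \<le> x T" for v using th[OF that] m by metis
  have yJ: "y k \<in> J" if "y k \<le> x T" for k
  proof -
    have "0 \<le> real k * \<delta>" using d by simp
    then show ?thesis using that xT x0J unfolding y_def J_def by auto
  qed
  have y_ge: "x0 \<le> y k" for k unfolding y_def using d by simp
  have step: "Fk k \<ge> \<delta> * m / 2 \<and> \<bar>\<delta>\<^sup>2 / Fk k - (th (y (Suc k)) - th (y k))\<bar> \<le> C * \<delta>\<^sup>2"
    if yk1: "y (Suc k) \<le> x T" for k
  proof -
    have yk: "y k \<le> x T" using yk1 ySuc d by simp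
    define \<theta>1 where "\<theta>1 = th (y k)"
    define \<theta>2 where "\<theta>2 = th (y (Suc k))"
    have t1: "\<theta>1 \<in> {0..T}" "x \<theta>1 = y k" unfolding \<theta>1_def using th[OF y_ge yk] by auto
    have t2: "\<theta>2 \<in> {0..T}" "x \<theta>2 = y (Suc k)" unfolding \<theta>2_def using th[OF y_ge yk1] by auto
    have t12: "\<theta>1 \<le> \<theta>2" using xle_imp[OF t1(1) t2(1)] t1 t2 ySuc d by simp
    obtain \<xi> where xi: "\<xi> \<in> {\<theta>1..\<theta>2}" "x \<theta>2 - x \<theta>1 = s (x \<xi>) * (\<theta>2 - \<theta>1)"
      using x_mvt[OF xd _ t12] t1 t2 by auto
    define \<sigma> where "\<sigma> = s (x \<xi>)"
    have xiT: "\<xi> \<in> {0..T}" using xi t1 t2 by auto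
    have \<sigma>m: "\<sigma> \<ge> m" unfolding \<sigma>_def using m xiT by auto
    have hx: "\<delta> = \<sigma> * (\<theta>2 - \<theta>1)" using xi(2) t1 t2 ySuc unfolding \<sigma>_def by simp
    have xrange: "y k \<le> x \<xi>" "x \<xi> \<le> y (Suc k)"
      using xmono[of \<theta>1 \<xi>] xmono[of \<xi> \<theta>2] xi t1 t2 by auto
    have "\<bar>\<sigma> - s (y k)\<bar> \<le> Ls * \<bar>x \<xi> - y k\<bar>"
      using sL xr xiT yJ[OF yk] unfolding lipon_def \<sigma>_def J_def by blast
    also have "\<dots> \<le> Ls * \<delta>" using xrange ySuc Ls0 by (intro mult_left_mono) auto
    finally have s1: "\<bar>\<sigma> - s (y k)\<bar> \<le> Ls * \<delta>" .
    have s2: "\<bar>Fk k - \<delta> * s (y k)\<bar> \<le> M * \<delta>\<^sup>2"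
    proof -
      have "\<bar>F (y (Suc k)) (y k) - (y (Suc k) - y k) * s (y k)\<bar> \<le> M * (y (Suc k) - y k)\<^sup>2"
        using tay yJ[OF yk] yJ[OF yk1] unfolding J_def by blast
      then show ?thesis unfolding Fk_def ySuc by simp
    qed
    have sk: "s (y k) \<ge> m" using sy[OF y_ge yk] .
    have "M * \<delta>\<^sup>2 = \<delta> * (M * \<delta>)" by (simp add: power2_eq_square)
    also have "\<dots> \<le> \<delta> * (m / 2)" using d by (intro mult_left_mono) auto
    finally have md: "M * \<delta>\<^sup>2 \<le> \<delta> * (m / 2)" .
    have dm: "\<delta> * m \<le> \<delta> * s (y k)" using sk d by simp
    have "Fk k \<ge> \<delta> * s (y k) - M * \<delta>\<^sup>2" using s2 by (simp only: abs_le_iff) linarith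
    then have Fm: "Fk k \<ge> \<delta> * m / 2" using md dm by linarith
    have Fp: "Fk k > 0" using Fm d m by (smt (verit) mult_pos_pos half_gt_zero)
    have \<sigma>p: "\<sigma> > 0" using \<sigma>m m by simp
    have th_eq0: "\<theta>2 - \<theta>1 = \<delta> / \<sigma>" using hx \<sigma>p by (simp add: field_simps)
    have th_eq: "th (y (Suc k)) - th (y k) = \<delta> / \<sigma>" using th_eq0 unfolding \<theta>1_def \<theta>2_def .
    have "\<delta>\<^sup>2 / Fk k - \<delta> / \<sigma> = \<delta> * (\<delta> * \<sigma> - Fk k) / (Fk k * \<sigma>)"
      using Fp \<sigma>p by (simp add: field_simps power2_eq_square)
    then have eqa: "\<bar>\<delta>\<^sup>2 / Fk k - \<delta> / \<sigma>\<bar> = \<delta> * \<bar>\<delta> * \<sigma> - Fk k\<bar> / (Fk k * \<sigma>)"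
      using Fp \<sigma>p d by (simp add: abs_mult)
    have e1: "\<delta> * \<sigma> - Fk k = \<delta> * (\<sigma> - s (y k)) - (Fk k - \<delta> * s (y k))" by (simp add: algebra_simps)
    have e1b: "\<bar>\<delta> * (\<sigma> - s (y k))\<bar> = \<delta> * \<bar>\<sigma> - s (y k)\<bar>" using d by (simp add: abs_mult)
    have e2: "\<bar>\<delta> * \<sigma> - Fk k\<bar> \<le> \<delta> * \<bar>\<sigma> - s (y k)\<bar> + \<bar>Fk k - \<delta> * s (y k)\<bar>"
      unfolding e1 e1b[symmetric] by (rule abs_triangle_ineq4)
    have e3: "\<delta> * \<bar>\<sigma> - s (y k)\<bar> \<le> \<delta> * (Ls * \<delta>)" using s1 d by (intro mult_left_mono) auto
    have e4: "(Ls + M) * \<delta>\<^sup>2 = \<delta> * (Ls * \<delta>) + M * \<delta>\<^sup>2" by (simp add: power2_eq_square algebra_simps)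
    have num: "\<bar>\<delta> * \<sigma> - Fk k\<bar> \<le> (Ls + M) * \<delta>\<^sup>2" using e2 e3 s2 e4 by linarith
    have num2: "\<delta> * \<bar>\<delta> * \<sigma> - Fk k\<bar> \<le> \<delta> * ((Ls + M) * \<delta>\<^sup>2)" using num d by (intro mult_left_mono) auto
    have den: "\<delta> * m / 2 * m \<le> Fk k * \<sigma>" using Fm \<sigma>m d m Fp by (intro mult_mono) auto
    have nn: "0 \<le> \<delta> * ((Ls + M) * \<delta>\<^sup>2)" using d Ls0 M0 by simp
    have dp: "0 < \<delta> * m / 2 * m" using d m by simp
    have "\<bar>\<delta>\<^sup>2 / Fk k - \<delta> / \<sigma>\<bar> \<le> \<delta> * ((Ls + M) * \<delta>\<^sup>2) / (\<delta> * m / 2 * m)"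
      unfolding eqa by (rule frac_le[OF nn num2 dp den])
    also have "\<dots> = C * \<delta>\<^sup>2" unfolding C_def using d m by (simp add: field_simps power2_eq_square)
    finally show ?thesis using Fm th_eq by simp
  qed
  have sumest: "y i \<le> x T \<longrightarrow> \<bar>\<tau> i - th (y i)\<bar> \<le> C * real i * \<delta>\<^sup>2" for i
  proof (induction i)
    case 0
    have "y 0 = x0" unfolding y_def by simp
    then show ?case unfolding \<tau>_def using th0 by simp
  next
    case (Suc i)
    show ?case
    proof
      assume yS: "y (Suc i) \<le> x T"
      then have yi: "y i \<le> x T" using ySuc d by simp
      have "\<tau> (Suc i) - th (y (Suc i)) = (\<tau> i - th (y i)) + (\<delta>\<^sup>2 / Fk i - (th (y (Suc i)) - th (y i)))"
        unfolding \<tau>_def by simp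
      then have "\<bar>\<tau> (Suc i) - th (y (Suc i))\<bar> \<le> \<bar>\<tau> i - th (y i)\<bar> + \<bar>\<delta>\<^sup>2 / Fk i - (th (y (Suc i)) - th (y i))\<bar>"
        by linarith
      also have "\<dots> \<le> C * real i * \<delta>\<^sup>2 + C * \<delta>\<^sup>2" using Suc.IH yi step[OF yS] by (intro add_mono) auto
      finally show "\<bar>\<tau> (Suc i) - th (y (Suc i))\<bar> \<le> C * real (Suc i) * \<delta>\<^sup>2" by (simp add: algebra_simps)
    qed
  qed
  have C0: "C \<ge> 0" unfolding C_def using Ls0 M0 by simp
  have E: "\<bar>\<tau> i - th (y i)\<bar> \<le> E0 * \<delta>" if "y i \<le> x T" for i
  proof -
    have "real i * \<delta> \<le> a1 - a0" using that xT x0J unfolding y_def J_def by auto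
    then have "C * real i * \<delta>\<^sup>2 \<le> C * (a1 - a0) * \<delta>"
      using C0 d by (simp add: power2_eq_square mult.assoc mult_left_mono mult_right_mono)
    then show ?thesis using sumest[of i] that unfolding E0_def by simp
  qed
  have valid: "\<forall>k<i. y (Suc k) \<in> J \<and> Fk k > 0" if "y i \<le> x T" for i
  proof (intro allI impI)
    fix k assume "k < i"
    then have "y (Suc k) \<le> y i" unfolding y_def using d by (simp add: mult_right_mono)
    then have yk1: "y (Suc k) \<le> x T" using that by simp
    show "y (Suc k) \<in> J \<and> Fk k > 0" using yJ[OF yk1] step[OF yk1] d m
      by (smt (verit) mult_pos_pos half_gt_zero)
  qed
  define R where "R = {i. reached J F x0 \<delta> (t / \<delta>\<^sup>2) i}"
  have Rchar: "i \<in> R \<longleftrightarrow> (\<forall>k<i. y (Suc k) \<in> J \<and> Fk k > 0) \<and> \<tau> i \<le> t" for i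
    unfolding R_def \<tau>_def Fk_def y_def using reached_iff[OF d(1), of J F x0 t i] by simp
  have tnn: "t / \<delta>\<^sup>2 \<ge> 0" using t d by simp
  have RM: "Max R \<in> R" "\<forall>i\<in>R. i \<le> Max R"
    using R_max[OF d(1) tnn x0J[unfolded J_def]] unfolding R_def J_def by auto
  define K where "K = Max R"
  have res: "resident J F x0 \<delta> (t / \<delta>\<^sup>2) = y K" unfolding resident_def R_def K_def y_def ..
  define E where "E = E0 * \<delta>"
  have E_nn: "E \<ge> 0" unfolding E_def E0_def using C0 d x0J xT unfolding J_def by simp
  have lower: "x t - y K \<le> (S * E0 + 1) * \<delta>"
  proof -
    define t0 where "t0 = max 0 (t - E)"
    have t0: "t0 \<in> {0..T}" "t0 \<le> t" "t - t0 \<le> E" using t E_nn unfolding t0_def by auto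
    have xt0: "x0 \<le> x t0" "x t0 \<le> x T" using xmono[of 0 t0] xmono[of t0 T] t0 x0 by auto
    define j where "j = nat \<lfloor>(x t0 - x0) / \<delta>\<rfloor>"
    have q0: "(x t0 - x0) / \<delta> \<ge> 0" using xt0 d by simp
    have rj: "real j \<le> (x t0 - x0) / \<delta>" "(x t0 - x0) / \<delta> < real j + 1"
      unfolding j_def using q0 by linarith+
    have yj: "y j \<le> x t0" "x t0 < y j + \<delta>" using rj d unfolding y_def by (simp_all add: field_simps)
    have yjT: "y j \<le> x T" using yj xt0 by simp
    have thj: "th (y j) \<le> t0" using th[OF y_ge yjT] xle_imp[of "th (y j)" t0] t0 yj by auto
    have "\<tau> j \<le> t"
    proof (cases "t0 = 0")
      case True
      then have "x t0 = x0" using x0 by simp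
      then have "j = 0" unfolding j_def by simp
      then show ?thesis unfolding \<tau>_def using t by simp
    next
      case False
      then have "t0 = t - E" unfolding t0_def by auto
      then show ?thesis using E[OF yjT] thj unfolding E_def by simp
    qed
    then have "j \<in> R" using Rchar valid[OF yjT] by blast
    then have "j \<le> K" using RM unfolding K_def by blast
    then have "y j \<le> y K" unfolding y_def using d by (simp add: mult_right_mono)
    moreover have "x t - x t0 \<le> S * E"
      using xinc[of t0 t] t0 t S by (smt (verit) mult_left_mono atLeastAtMost_iff)
    ultimately show ?thesis using yj unfolding E_def by (simp add: algebra_simps)
  qed
  have upper: "y K - x t \<le> (S + M) * (1 / m + E0) * \<delta>"
  proof -
    define j where "j = nat \<lfloor>(x t - x0) / \<delta>\<rfloor>"
    have xt: "x0 \<le> x t" "x t \<le> x T" using xmono[of 0 t] xmono[of t T] t x0 by auto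
    have q0: "(x t - x0) / \<delta> \<ge> 0" using xt d by simp
    have rj: "real j \<le> (x t - x0) / \<delta>" "(x t - x0) / \<delta> < real j + 1"
      unfolding j_def using q0 by linarith+
    have yj: "y j \<le> x t" "x t < y j + \<delta>" using rj d unfolding y_def by (simp_all add: field_simps)
    have yjT: "y j \<le> x T" using yj xt by simp
    have U0: "(S + M) * (1 / m + E0) * \<delta> \<ge> 0" using S M0 m E_nn d unfolding E_def
      by (simp add: zero_le_mult_iff)
    show ?thesis
    proof (cases "K \<le> j")
      case True
      then have "y K \<le> y j" unfolding y_def using d by (simp add: mult_right_mono)
      then show ?thesis using yj U0 by simp
    next
      case False
      then have jK: "j < K" by simp
      have KR: "K \<in> R" using RM unfolding K_def by simp
      then have vK: "\<forall>k<K. y (Suc k) \<in> J \<and> Fk k > 0" and tK: "\<tau> K \<le> t" using Rchar by blast+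
      have thj: "th (y j) \<in> {0..T}" "x (th (y j)) = y j" using th[OF y_ge yjT] by auto
      have thjt: "th (y j) \<le> t" using xle_imp[of "th (y j)" t] thj t yj by auto
      have "m * (t - th (y j)) \<le> x t - y j" using xinc[of "th (y j)" t] thj thjt t by auto
      then have "m * (t - th (y j)) < \<delta>" using yj by simp
      then have tt: "t - th (y j) < \<delta> / m" using m by (simp add: field_simps)
      have tj: "\<tau> j \<ge> th (y j) - E" using E[OF yjT] unfolding E_def by simp
      have split: "\<tau> K = \<tau> j + (\<Sum>k\<in>{j..<K}. \<delta>\<^sup>2 / Fk k)"
      proof -
        have "{..<K} = {..<j} \<union> {j..<K}" using jK by auto
        then show ?thesis unfolding \<tau>_def lessThan_atLeast0 using sum.atLeastLessThan_concat[of 0 j K "\<lambda>k. \<delta>\<^sup>2 / Fk k"] jK by simp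
      qed
      have each: "\<delta>\<^sup>2 / Fk k \<ge> \<delta> / (S + M)" if "k \<in> {j..<K}" for k
      proof -
        have kK: "k < K" using that by simp
        have yk1: "y (Suc k) \<in> J" and Fp: "Fk k > 0" using vK kK by auto
        have ykJ: "y k \<in> J"
        proof (cases k)
          case 0 then show ?thesis using x0J unfolding y_def by simp
        next
          case (Suc k') then show ?thesis using vK kK by auto
        qed
        have "\<bar>F (y (Suc k)) (y k) - (y (Suc k) - y k) * s (y k)\<bar> \<le> M * (y (Suc k) - y k)\<^sup>2"
          using tay ykJ yk1 unfolding J_def by blast
        then have a0: "\<bar>Fk k - \<delta> * s (y k)\<bar> \<le> M * \<delta>\<^sup>2" unfolding Fk_def ySuc by simp
        have a1: "Fk k \<le> \<delta> * s (y k) + M * \<delta>\<^sup>2" using a0 by (simp only: abs_le_iff) linarith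
        have "s (y k) \<le> S" using S ykJ unfolding J_def by force
        then have a2: "\<delta> * s (y k) \<le> \<delta> * S" using d by (intro mult_left_mono) auto
        have a3: "M * \<delta>\<^sup>2 \<le> M * \<delta>"
        proof -
          have "\<delta> * \<delta> \<le> 1 * \<delta>" using d by (intro mult_right_mono) auto
          then show ?thesis using M0 unfolding power2_eq_square by (intro mult_left_mono) auto
        qed
        have a4: "\<delta> * (S + M) = \<delta> * S + M * \<delta>" by (simp add: algebra_simps)
        have "Fk k \<le> \<delta> * (S + M)" using a1 a2 a3 a4 by linarith
        then have "\<delta>\<^sup>2 / (\<delta> * (S + M)) \<le> \<delta>\<^sup>2 / Fk k" using Fp d by (intro divide_left_mono) auto
        moreover have "\<delta>\<^sup>2 / (\<delta> * (S + M)) = \<delta> / (S + M)" using d by (simp add: power2_eq_square)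
        ultimately show ?thesis by simp
      qed
      have "real (K - j) * (\<delta> / (S + M)) \<le> (\<Sum>k\<in>{j..<K}. \<delta>\<^sup>2 / Fk k)"
        using sum_mono[of "{j..<K}" "\<lambda>_. \<delta> / (S + M)" "\<lambda>k. \<delta>\<^sup>2 / Fk k"] each by simp
      also have "\<dots> \<le> \<delta> / m + E" using split tK tj tt by linarith
      finally have kk: "real (K - j) * (\<delta> / (S + M)) \<le> \<delta> / m + E" .
      have SMp: "S + M > 0" using S M0 by simp
      have "real (K - j) * \<delta> = (S + M) * (real (K - j) * (\<delta> / (S + M)))" using SMp by simp
      also have "\<dots> \<le> (S + M) * (\<delta> / m + E)" using kk SMp by (intro mult_left_mono) auto
      also have "\<dots> = (S + M) * (1 / m + E0) * \<delta>" unfolding E_def using m by (simp add: field_simps)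
      finally have kk2: "real (K - j) * \<delta> \<le> (S + M) * (1 / m + E0) * \<delta>" .
      have "y K - y j = real (K - j) * \<delta>" unfolding y_def using jK by (simp add: of_nat_diff algebra_simps)
      then show ?thesis using yj kk2 by linarith
    qed
  qed
  have n1: "(S + M) * (1 / m + E0) * \<delta> \<ge> 0" using S M0 m E_nn d unfolding E_def
    by (intro mult_nonneg_nonneg add_nonneg_nonneg) (auto simp: zero_le_mult_iff)
  have n2: "(S * E0 + 1) * \<delta> \<ge> 0" using S E_nn d unfolding E_def
    by (intro mult_nonneg_nonneg add_nonneg_nonneg) (auto simp: zero_le_mult_iff)
  have eqK: "((S + M) * (1 / m + E0) + S * E0 + 1) * \<delta> = (S + M) * (1 / m + E0) * \<delta> + (S * E0 + 1) * \<delta>"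
    by (simp add: algebra_simps)
  show ?thesis unfolding res[unfolded J_def] eqK using lower upper n1 n2
    by (simp only: abs_le_iff) linarith
qed

lemma deriv_unique_Icc:
  fixes g :: "real \<Rightarrow> real"
  assumes "a < b" "y \<in> {a..b}"
    and "(g has_real_derivative D1) (at y within {a..b})"
    and "(g has_real_derivative D2) (at y within {a..b})"
  shows "D1 = D2"
proof -
  have "(*) D1 = (*) D2"
  proof (rule frechet_derivative_unique_within_closed_interval[of a b y g])
    show "\<And>i. i \<in> Basis \<Longrightarrow> a \<bullet> i < b \<bullet> i" using assms(1) by simp
    show "y \<in> cbox a b" using assms(2) by simp
    show "(g has_derivative (*) D1) (at y within cbox a b)" using assms(3) by (simp add: has_field_derivative_def)
    show "(g has_derivative (*) D2) (at y within cbox a b)" using assms(4) by (simp add: has_field_derivative_def)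
  qed
  then show ?thesis by (metis mult.right_neutral)
qed

lemma unif_from_bound:
  fixes G :: "real \<Rightarrow> real \<Rightarrow> real"
  assumes "\<delta>1 > 0" "K1 \<ge> 0"
    and "\<And>\<delta> t. 0 < \<delta> \<Longrightarrow> \<delta> < \<delta>1 \<Longrightarrow> t \<in> {0..T} \<Longrightarrow> \<bar>G \<delta> t - x t\<bar> \<le> K1 * \<delta>"
  shows "uniform_limit {0..T} G x (at_right 0)"
  unfolding uniform_limit_iff
proof (intro allI impI)
  fix e :: real assume e: "e > 0"
  show "\<forall>\<^sub>F \<delta> in at_right 0. \<forall>t\<in>{0..T}. dist (G \<delta> t) (x t) < e"
    unfolding eventually_at_right_field
  proof (intro exI[of _ "min \<delta>1 (e / (K1 + 1))"] conjI allI impI ballI)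
    show "min \<delta>1 (e / (K1 + 1)) > 0" using assms e by simp
    fix \<delta> t assume d: "\<delta> > 0" "\<delta> < min \<delta>1 (e / (K1 + 1))" and t: "t \<in> {0..T}"
    have "\<bar>G \<delta> t - x t\<bar> \<le> K1 * \<delta>" using assms(3)[of \<delta> t] d t by simp
    also have "\<dots> \<le> (K1 + 1) * \<delta>" using d by simp
    also have "\<dots> < (K1 + 1) * (e / (K1 + 1))" using d assms(2) by (intro mult_strict_left_mono) auto
    also have "\<dots> = e" using assms(2) by simp
    finally show "dist (G \<delta> t) (x t) < e" by (simp add: dist_real_def)
  qed
qed

theorem theorem2:
  fixes a0 a1 x0 T :: real
    and b d :: "real \<Rightarrow> real" and c :: "real \<Rightarrow> real \<Rightarrow> real"
    and x :: "real \<Rightarrow> real"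
  assumes I_ne: "a0 < a1"
    and b_C2: "C2_on {a0..a1} b" and d_C2: "C2_on {a0..a1} d"
    and c_C2: "C2_on ({a0..a1} \<times> {a0..a1}) (\<lambda>p. c (fst p) (snd p))"
    and b_nonneg: "\<forall>y\<in>{a0..a1}. b y \<ge> 0"
    and d_nonneg: "\<forall>y\<in>{a0..a1}. d y \<ge> 0"
    and c_nonneg: "\<forall>y\<in>{a0..a1}. \<forall>z\<in>{a0..a1}. c y z \<ge> 0"
    and coexist: "\<forall>y\<in>{a0..a1}. b y > d y \<and> c y y > 0"
    and x0_int: "x0 \<in> {a0<..<a1}"
    and not_extremum: "\<forall>\<^sub>F \<delta> in at_right 0.
          \<not> local_fitness_max (fit b d c) \<delta> x0 \<and> \<not> local_fitness_min (fit b d c) \<delta> x0"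
    and upward: "\<forall>\<^sub>F \<delta> in at_right 0. fit b d c (x0 + \<delta>) x0 > 0"
    and T_pos: "T > 0"
    and x_range: "\<forall>t\<in>{0..T}. x t \<in> {a0..a1}"
    and x_init: "x 0 = x0"
    and x_ode: "\<forall>t\<in>{0..T}. \<exists>D. (x has_real_derivative D) (at t within {0..T}) \<and>
                   ((\<lambda>y. fit b d c y (x t)) has_real_derivative D) (at (x t) within {a0..a1})"
  shows "uniform_limit {0..T}
           (\<lambda>\<delta> t. resident {a0..a1} (fit b d c) x0 \<delta> (t / \<delta>\<^sup>2)) x (at_right 0)"
proof -
  define F where "F = fit b d c"
  define J where "J = {a0..a1}"
  obtain s M Ls S where M0: "M \<ge> 0" and Ls0: "Ls \<ge> 0" and S0: "S > 0"
    and sd: "\<forall>y\<in>J. ((\<lambda>u. F u y) has_real_derivative s y) (at y within J)"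
    and tay: "\<forall>y\<in>J. \<forall>y'\<in>J. \<bar>F y' y - (y' - y) * s y\<bar> \<le> M * (y' - y)\<^sup>2"
    and sL: "lipon J s Ls" and Sb: "\<forall>y\<in>J. \<bar>s y\<bar> \<le> S"
    using smooth_pkg[OF I_ne b_C2 d_C2 c_C2 coexist] unfolding F_def J_def by blast
  have x0J: "x0 \<in> J" using x0_int unfolding J_def by auto
  have xd: "\<forall>t\<in>{0..T}. (x has_real_derivative s (x t)) (at t within {0..T})"
  proof
    fix t assume t: "t \<in> {0..T}"
    obtain D where D: "(x has_real_derivative D) (at t within {0..T})"
      "((\<lambda>y. F y (x t)) has_real_derivative D) (at (x t) within J)"
      using x_ode t unfolding F_def J_def by blast
    have xtJ: "x t \<in> J" using x_range t unfolding J_def by auto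
    have "D = s (x t)" using deriv_unique_Icc[OF I_ne xtJ[unfolded J_def] D(2)[unfolded J_def]] sd xtJ
      unfolding J_def by blast
    then show "(x has_real_derivative s (x t)) (at t within {0..T})" using D(1) by simp
  qed
  have xr: "\<forall>t\<in>{0..T}. x t \<in> J" using x_range unfolding J_def .
  have s0: "s x0 \<ge> 0"
  proof (rule ccontr)
    assume neg: "\<not> s x0 \<ge> 0"
    obtain b0 where b0: "b0 > 0" "\<forall>\<delta>>0. \<delta> < b0 \<longrightarrow> F (x0 + \<delta>) x0 > 0"
      using upward unfolding eventually_at_right_field F_def by auto
    define \<delta> where "\<delta> = min (b0 / 2) (min ((a1 - x0) / 2) (- s x0 / (2 * (M + 1))))"
    have dp: "\<delta> > 0" unfolding \<delta>_def using b0 x0_int neg M0 by (auto simp: divide_neg_pos)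
    have "\<delta> < b0" unfolding \<delta>_def using b0 by linarith
    then have Fp: "F (x0 + \<delta>) x0 > 0" using b0 dp by blast
    have "\<delta> \<le> (a1 - x0) / 2" unfolding \<delta>_def by linarith
    then have xdJ: "x0 + \<delta> \<in> J" unfolding J_def using dp x0_int by auto
    have "\<bar>F (x0 + \<delta>) x0 - (x0 + \<delta> - x0) * s x0\<bar> \<le> M * (x0 + \<delta> - x0)\<^sup>2"
      using tay x0J xdJ by blast
    then have "F (x0 + \<delta>) x0 \<le> \<delta> * s x0 + M * \<delta>\<^sup>2" by (simp only: abs_le_iff) simp
    also have "\<dots> = \<delta> * (s x0 + M * \<delta>)" by (simp add: power2_eq_square algebra_simps)
    also have "\<dots> < 0"
    proof -
      have "\<delta> \<le> - s x0 / (2 * (M + 1))" unfolding \<delta>_def by linarith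
      then have "(M + 1) * \<delta> \<le> (M + 1) * (- s x0 / (2 * (M + 1)))" using M0 by (intro mult_left_mono) auto
      also have "\<dots> = - s x0 / 2" using M0 by (simp add: field_simps)
      finally have "(M + 1) * \<delta> \<le> - s x0 / 2" .
      then have "s x0 + M * \<delta> < 0" using neg dp by (simp add: algebra_simps)
      then show ?thesis using dp by (simp add: mult_pos_neg)
    qed
    finally show False using Fp by simp
  qed
  show ?thesis
  proof (cases "s x0 = 0")
    case True
    have xc: "x t = x0" if "t \<in> {0..T}" for t
      by (rule gronwall_zero[OF xd xr sL Ls0 x0J True _ x_init that]) (use T_pos in auto)
    define A where "A = Ls + M + 1"
    show ?thesis unfolding F_def[symmetric]
    proof (rule unif_from_bound[of 1 "exp (A * T)"])
      fix \<delta> t :: real assume d: "0 < \<delta>" "\<delta> < 1" and t: "t \<in> {0..T}"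
      define R where "R = {i. reached J F x0 \<delta> (t / \<delta>\<^sup>2) i}"
      have tnn: "t / \<delta>\<^sup>2 \<ge> 0" using t d by simp
      have KR: "Max R \<in> R" using R_max[OF d(1) tnn x0J[unfolded J_def]] unfolding R_def J_def by auto
      have "real (Max R) + 1 \<le> exp (A * T)" unfolding A_def
        by (rule caseA_bound[OF d(1) _ _ x0J[unfolded J_def] tay[unfolded J_def] sL[unfolded J_def] True M0 Ls0])
           (use t KR in \<open>auto simp: R_def J_def\<close>)
      then have "real (Max R) * \<delta> \<le> exp (A * T) * \<delta>" using d by (intro mult_right_mono) auto
      then show "\<bar>resident {a0..a1} F x0 \<delta> (t / \<delta>\<^sup>2) - x t\<bar> \<le> exp (A * T) * \<delta>"
        unfolding resident_def xc[OF t] R_def J_def using d by simp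
    qed auto
  next
    case False
    then have s0p: "s x0 > 0" using s0 by simp
    have sxc: "continuous_on {0..T} (\<lambda>t. s (x t))"
      by (rule continuous_on_compose2[OF lipon_cont[OF sL] x_cont[OF xd]]) (use xr in auto)
    have spos: "s (x t) > 0" if t: "t \<in> {0..T}" for t
    proof (rule ccontr)
      assume "\<not> s (x t) > 0"
      then have "s (x t) \<le> 0" by simp
      moreover have "continuous_on {0..t} (\<lambda>t. s (x t))" using sxc t by (auto intro: continuous_on_subset)
      ultimately obtain t2 where t2: "0 \<le> t2" "t2 \<le> t" "s (x t2) = 0"
        using IVT2'[of "\<lambda>t. s (x t)" t 0 0] s0p x_init t by auto
      have t2T: "t2 \<in> {0..T}" using t2 t by auto
      have "x 0 = x t2" by (rule gronwall_zero[OF xd xr sL Ls0 _ t2(3) t2T refl]) (use xr t2T T_pos in auto)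
      then show False using t2 s0p x_init by simp
    qed
    obtain tm where tm: "tm \<in> {0..T}" "\<forall>t\<in>{0..T}. s (x tm) \<le> s (x t)"
      using continuous_attains_inf[OF compact_Icc _ sxc] T_pos by auto
    define m where "m = s (x tm)"
    have m: "m > 0" "\<forall>t\<in>{0..T}. s (x t) \<ge> m" unfolding m_def using spos tm by auto
    define C where "C = 2 * (Ls + M) / m\<^sup>2"
    define E0 where "E0 = C * (a1 - a0)"
    define K1 where "K1 = (S + M) * (1 / m + E0) + S * E0 + 1"
    have E00: "E0 \<ge> 0" unfolding E0_def C_def using Ls0 M0 I_ne m by simp
    have K10: "K1 \<ge> 0" unfolding K1_def using S0 M0 m E00 by (simp add: add_nonneg_nonneg)
    define \<delta>1 where "\<delta>1 = min 1 (m / (2 * (M + 1)))"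
    have d10: "\<delta>1 > 0" unfolding \<delta>1_def using m M0 by simp
    show ?thesis unfolding F_def[symmetric]
    proof (rule unif_from_bound[OF d10 K10])
      fix \<delta> t :: real assume d: "0 < \<delta>" "\<delta> < \<delta>1" and t: "t \<in> {0..T}"
      have d1: "\<delta> \<le> 1" using d unfolding \<delta>1_def by simp
      have "\<delta> \<le> m / (2 * (M + 1))" using d unfolding \<delta>1_def by simp
      then have "(M + 1) * \<delta> \<le> (M + 1) * (m / (2 * (M + 1)))" using M0 by (intro mult_left_mono) auto
      also have "\<dots> = m / 2" using M0 by (simp add: field_simps)
      finally have d2: "M * \<delta> \<le> m / 2" using d by (simp add: algebra_simps)
      show "\<bar>resident {a0..a1} F x0 \<delta> (t / \<delta>\<^sup>2) - x t\<bar> \<le> K1 * \<delta>"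
        unfolding K1_def E0_def C_def
        by (rule caseB[OF T_pos xd xr[unfolded J_def] x_init m tay[unfolded J_def] sL[unfolded J_def] Ls0 M0
              Sb[unfolded J_def] S0 d(1) d1 d2 t])
    qed
  qed
qed

end
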